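(* Consider two spiking neurons $\hat\sigma$ and $\tilde\sigma$ (same threshold $u_{th}$, reset $V_{reset}$, decay $\beta\in(0,1)$) with the same initial temporal input $\tilde h^0=\hat h^0$, receiving spatial input features $\hat x^t$ and $\tilde x^t$, $t=1,\dots,T$. Suppose $\hat u^T=\hat h^{T-1}+\hat x^T$ is a random variable following a $u_{th}$-Neighborhood-Finite Distribution, that $|\tilde x^t-\hat x^t|\le\epsilon$ for all $t=1,\dots,T$, and that $\hat\sigma^t(\hat x^t)=\tilde\sigma^t(\tilde x^t)$ for $t=1,\dots,T-1$. Then $P[\hat\sigma^T(\hat x^T)\neq\tilde\sigma^T(\tilde x^T)]$ has an upper bound proportional to $\frac{\epsilon}{1-\beta}$ (i.e. it is at most a constant multiple of $\frac{\epsilon}{1-\beta}$, the constant depending only on the distribution of $\hat u^T$).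
   Context: A LIF spiking neuron with firing threshold $u_{th}$, reset potential $V_{reset}$ and decay factor $\beta\in(0,1)$ receives spatial input features $x^1,x^2,\dots$ and evolves by $u^t=h^{t-1}+x^t$, $s^t=\mathrm{Hea}(u^t-u_{th})$, $h^t=V_{reset}s^t+\beta u^t(1-s^t)$, where $\mathrm{Hea}(y)=1$ if $y\ge0$ and $0$ otherwise; the output at timestep $t$ is written $\sigma^t(x^t)=s^t$ (it depends on earlier inputs through $h^{t-1}$). A probability density $p$ is an $m$-Neighborhood-Finite Distribution if there exists $\epsilon>0$ with $\sup_{x\in[m-\epsilon,m+\epsilon]}p(x)<+\infty$. *)

theory Defs
  imports "HOL-Probability.Probability"
begin

definition hea :: "real \<Rightarrow> real" where
  "hea y = (if y \<ge> 0 then 1 else 0)"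

text \<open>Temporal state h^t of a LIF neuron with threshold uth, reset vr, decay beta,
  initial temporal input h0 and spatial input sequence x (x t for t = 1,2,...).
  h^t = V_reset s^t + beta u^t (1 - s^t), u^t = h^(t-1) + x^t, s^t = Hea(u^t - uth).\<close>
fun lif_h :: "real \<Rightarrow> real \<Rightarrow> real \<Rightarrow> real \<Rightarrow> (nat \<Rightarrow> real) \<Rightarrow> nat \<Rightarrow> real" where
  "lif_h uth vr beta h0 x 0 = h0"
| "lif_h uth vr beta h0 x (Suc t) =
     (let u = lif_h uth vr beta h0 x t + x (Suc t); s = hea (u - uth)
      in vr * s + beta * u * (1 - s))"

text \<open>Membrane potential u^t = h^(t-1) + x^t (meaningful for t >= 1).\<close>
definition lif_u :: "real \<Rightarrow> real \<Rightarrow> real \<Rightarrow> real \<Rightarrow> (nat \<Rightarrow> real) \<Rightarrow> nat \<Rightarrow> real" where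
  "lif_u uth vr beta h0 x t = lif_h uth vr beta h0 x (t - 1) + x t"

definition lif_s :: "real \<Rightarrow> real \<Rightarrow> real \<Rightarrow> real \<Rightarrow> (nat \<Rightarrow> real) \<Rightarrow> nat \<Rightarrow> real" where
  "lif_s uth vr beta h0 x t = hea (lif_u uth vr beta h0 x t - uth)"

definition nbhd_finite :: "(real \<Rightarrow> ennreal) \<Rightarrow> real \<Rightarrow> bool" where
  "nbhd_finite p m \<longleftrightarrow> (\<exists>e>0. (SUP x\<in>{m-e..m+e}. p x) < \<infinity>)"

end

theory Submission
  imports Defs
begin

lemma lif_diff:
  assumes b0: "0 < \<beta>" and b1: "\<beta> < 1" and e0: "0 \<le> \<epsilon>"
    and sp: "\<forall>t\<in>{1..<T}. lif_s uth vr \<beta> h0 x t = lif_s uth vr \<beta> h0 y t"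
    and cl: "\<forall>t\<in>{1..T}. \<bar>y t - x t\<bar> \<le> \<epsilon>"
  shows "n < T \<Longrightarrow> \<bar>lif_h uth vr \<beta> h0 y n - lif_h uth vr \<beta> h0 x n\<bar> \<le> \<beta> * \<epsilon> / (1 - \<beta>)"
proof (induction n)
  case 0
  then show ?case using b0 b1 e0 by simp
next
  case (Suc n)
  define ux where "ux = lif_h uth vr \<beta> h0 x n + x (Suc n)"
  define uy where "uy = lif_h uth vr \<beta> h0 y n + y (Suc n)"
  have IH: "\<bar>lif_h uth vr \<beta> h0 y n - lif_h uth vr \<beta> h0 x n\<bar> \<le> \<beta> * \<epsilon> / (1 - \<beta>)"
    using Suc by simp
  have c: "\<bar>y (Suc n) - x (Suc n)\<bar> \<le> \<epsilon>" using cl Suc.prems by simp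
  have "hea (ux - uth) = hea (uy - uth)"
  proof -
    have "Suc n \<in> {1..<T}" using Suc.prems by simp
    hence "lif_s uth vr \<beta> h0 x (Suc n) = lif_s uth vr \<beta> h0 y (Suc n)" using sp by blast
    thus ?thesis by (simp add: lif_s_def lif_u_def ux_def uy_def)
  qed
  hence hs: "(ux \<ge> uth \<and> uy \<ge> uth) \<or> (ux < uth \<and> uy < uth)"
    by (auto simp: hea_def split: if_splits)
  have u: "\<bar>uy - ux\<bar> \<le> \<beta> * \<epsilon> / (1 - \<beta>) + \<epsilon>"
    using IH c unfolding ux_def uy_def by linarith
  have eq: "\<beta> * \<epsilon> / (1 - \<beta>) + \<epsilon> = \<epsilon> / (1 - \<beta>)"
    using b1 by (simp add: field_simps)
  have "\<beta> * \<bar>uy - ux\<bar> \<le> \<beta> * (\<epsilon> / (1 - \<beta>))"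
    using u eq b0 by (metis mult_left_mono less_imp_le)
  hence bb: "\<bar>\<beta> * uy - \<beta> * ux\<bar> \<le> \<beta> * \<epsilon> / (1 - \<beta>)"
    using b0 by (simp add: abs_mult right_diff_distrib[symmetric])
  have nn: "0 \<le> \<beta> * \<epsilon> / (1 - \<beta>)" using b0 b1 e0 by simp
  show ?case
    using hs bb nn
    by (auto simp: Let_def hea_def ux_def[symmetric] uy_def[symmetric])
qed

lemma lif_final:
  assumes b0: "0 < \<beta>" and b1: "\<beta> < 1" and e0: "0 \<le> \<epsilon>" and T1: "1 \<le> T"
    and sp: "\<forall>t\<in>{1..<T}. lif_s uth vr \<beta> h0 x t = lif_s uth vr \<beta> h0 y t"
    and cl: "\<forall>t\<in>{1..T}. \<bar>y t - x t\<bar> \<le> \<epsilon>"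
    and ne: "lif_s uth vr \<beta> h0 x T \<noteq> lif_s uth vr \<beta> h0 y T"
  shows "lif_u uth vr \<beta> h0 x T \<in> {uth - \<epsilon> / (1 - \<beta>) .. uth + \<epsilon> / (1 - \<beta>)}"
proof -
  have d: "\<bar>lif_h uth vr \<beta> h0 y (T-1) - lif_h uth vr \<beta> h0 x (T-1)\<bar> \<le> \<beta> * \<epsilon> / (1 - \<beta>)"
    using lif_diff[OF b0 b1 e0 sp cl] T1 by simp
  have c: "\<bar>y T - x T\<bar> \<le> \<epsilon>" using cl T1 by simp
  have eq: "\<beta> * \<epsilon> / (1 - \<beta>) + \<epsilon> = \<epsilon> / (1 - \<beta>)"
    using b1 by (simp add: field_simps)
  have u: "\<bar>lif_u uth vr \<beta> h0 y T - lif_u uth vr \<beta> h0 x T\<bar> \<le> \<epsilon> / (1 - \<beta>)"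
    using d c eq unfolding lif_u_def by linarith
  show ?thesis using ne u
    by (auto simp: lif_s_def hea_def split: if_splits)
qed

theorem lemma3:
  fixes p :: "real \<Rightarrow> ennreal" and u_th :: real
  assumes "nbhd_finite p u_th"
  shows "\<exists>C::real. \<forall>(M::'a measure) V_reset \<beta> (h0::'a \<Rightarrow> real)
            (xh::nat \<Rightarrow> 'a \<Rightarrow> real) (xt::nat \<Rightarrow> 'a \<Rightarrow> real) (T::nat) (\<epsilon>::real).
     prob_space M \<and> 0 < \<beta> \<and> \<beta> < 1 \<and> 1 \<le> T
     \<and> h0 \<in> borel_measurable M
     \<and> (\<forall>t\<in>{1..T}. xh t \<in> borel_measurable M \<and> xt t \<in> borel_measurable M)
     \<and> distributed M lborel (\<lambda>\<omega>. lif_u u_th V_reset \<beta> (h0 \<omega>) (\<lambda>t. xh t \<omega>) T) p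
     \<and> (\<forall>\<omega>\<in>space M. \<forall>t\<in>{1..T}. \<bar>xt t \<omega> - xh t \<omega>\<bar> \<le> \<epsilon>)
     \<and> (\<forall>\<omega>\<in>space M. \<forall>t\<in>{1..<T}.
           lif_s u_th V_reset \<beta> (h0 \<omega>) (\<lambda>t. xh t \<omega>) t = lif_s u_th V_reset \<beta> (h0 \<omega>) (\<lambda>t. xt t \<omega>) t)
     \<longrightarrow> measure M {\<omega>\<in>space M. lif_s u_th V_reset \<beta> (h0 \<omega>) (\<lambda>t. xh t \<omega>) T
                                   \<noteq> lif_s u_th V_reset \<beta> (h0 \<omega>) (\<lambda>t. xt t \<omega>) T}
         \<le> C * \<epsilon> / (1 - \<beta>)"
proof -
  obtain e where e: "e > 0" and Sfin: "(SUP x\<in>{u_th-e..u_th+e}. p x) < \<infinity>"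
    using assms unfolding nbhd_finite_def by blast
  define Sr where "Sr = (SUP x\<in>{u_th-e..u_th+e}. p x)"
  define S where "S = enn2real Sr"
  have SrS: "Sr = ennreal S" using Sfin unfolding S_def Sr_def
    using ennreal_enn2real less_top by auto
  have S0: "S \<ge> 0" unfolding S_def by simp
  have pS: "p x \<le> Sr" if "x \<in> {u_th-e..u_th+e}" for x
    unfolding Sr_def using that by (rule SUP_upper)
  show ?thesis
  proof (rule exI[of _ "2 * S + 1 / e"], intro allI impI, elim conjE)
    fix M :: "'a measure" and V_reset \<beta> and h0 :: "'a \<Rightarrow> real"
      and xh xt :: "nat \<Rightarrow> 'a \<Rightarrow> real" and T :: nat and \<epsilon> :: real
    assume P: "prob_space M" and b0: "0 < \<beta>" and b1: "\<beta> < 1" and T1: "1 \<le> T"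
      and dist: "distributed M lborel (\<lambda>\<omega>. lif_u u_th V_reset \<beta> (h0 \<omega>) (\<lambda>t. xh t \<omega>) T) p"
      and cl: "\<forall>\<omega>\<in>space M. \<forall>t\<in>{1..T}. \<bar>xt t \<omega> - xh t \<omega>\<bar> \<le> \<epsilon>"
      and sp: "\<forall>\<omega>\<in>space M. \<forall>t\<in>{1..<T}.
           lif_s u_th V_reset \<beta> (h0 \<omega>) (\<lambda>t. xh t \<omega>) t = lif_s u_th V_reset \<beta> (h0 \<omega>) (\<lambda>t. xt t \<omega>) t"
    interpret prob_space M by (rule P)
    define X where "X = (\<lambda>\<omega>. lif_u u_th V_reset \<beta> (h0 \<omega>) (\<lambda>t. xh t \<omega>) T)"
    define r where "r = \<epsilon> / (1 - \<beta>)"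
    define I where "I = {u_th - r .. u_th + r}"
    define A where "A = {\<omega>\<in>space M. lif_s u_th V_reset \<beta> (h0 \<omega>) (\<lambda>t. xh t \<omega>) T
                                   \<noteq> lif_s u_th V_reset \<beta> (h0 \<omega>) (\<lambda>t. xt t \<omega>) T}"
    define B where "B = X -` I \<inter> space M"
    obtain \<omega>0 where "\<omega>0 \<in> space M" using not_empty by blast
    hence e0: "0 \<le> \<epsilon>" using cl T1 by fastforce
    have r0: "0 \<le> r" unfolding r_def using e0 b1 by simp
    have AB: "A \<subseteq> B"
    proof
      fix \<omega> assume "\<omega> \<in> A"
      hence w: "\<omega> \<in> space M" and ne: "lif_s u_th V_reset \<beta> (h0 \<omega>) (\<lambda>t. xh t \<omega>) T
                                   \<noteq> lif_s u_th V_reset \<beta> (h0 \<omega>) (\<lambda>t. xt t \<omega>) T"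
        unfolding A_def by auto
      have "X \<omega> \<in> I" unfolding X_def I_def r_def
        by (rule lif_final[OF b0 b1 e0 T1 _ _ ne]) (use w cl sp in auto)
      thus "\<omega> \<in> B" using w unfolding B_def by auto
    qed
    have Xm: "X \<in> measurable M lborel" using dist unfolding X_def
      by (rule distributed_measurable)
    have Bm: "B \<in> sets M" unfolding B_def I_def using Xm by (rule measurable_sets) simp
    have mA: "measure M A \<le> measure M B"
    proof (cases "A \<in> sets M")
      case True thus ?thesis using AB Bm by (simp add: finite_measure_mono)
    qed (simp add: measure_notin_sets)
    have goal_eq: "(2 * S + 1 / e) * \<epsilon> / (1 - \<beta>) = (2 * S + 1 / e) * r"
      unfolding r_def by simp
    show "measure M A \<le> (2 * S + 1 / e) * \<epsilon> / (1 - \<beta>)"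
    proof (cases "r \<le> e")
      case False
      have "measure M A \<le> 1" by simp
      also have "1 \<le> r / e" using False e by simp
      also have "r / e \<le> (2 * S + 1 / e) * r" using S0 r0 e
        by (simp add: field_simps)
      finally show ?thesis using goal_eq by simp
    next
      case True
      have pm: "p \<in> borel_measurable lborel" using dist by (rule distributed_borel_measurable)
      have "emeasure M B = emeasure (distr M lborel X) I"
        unfolding B_def using Xm by (simp add: emeasure_distr I_def)
      also have "\<dots> = emeasure (density lborel p) I"
        using distributed_distr_eq_density[OF dist] by (simp add: X_def)
      also have "\<dots> = (\<integral>\<^sup>+ x. p x * indicator I x \<partial>lborel)"
        using pm by (simp add: emeasure_density I_def)
      also have "\<dots> \<le> (\<integral>\<^sup>+ x. Sr * indicator I x \<partial>lborel)"
      proof (rule nn_integral_mono)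
        fix x show "p x * indicator I x \<le> Sr * indicator I x"
        proof (cases "x \<in> I")
          case True
          hence "x \<in> {u_th-e..u_th+e}" using \<open>r \<le> e\<close> unfolding I_def by auto
          thus ?thesis using True pS by simp
        qed simp
      qed
      also have "\<dots> = Sr * emeasure lborel I"
        by (rule nn_integral_cmult_indicator) (simp add: I_def)
      also have "\<dots> = ennreal (S * (2 * r))"
        using r0 S0 by (simp add: SrS I_def ennreal_mult)
      finally have "emeasure M B \<le> ennreal (S * (2 * r))" .
      hence "measure M B \<le> S * (2 * r)"
        using S0 r0 by (simp add: emeasure_eq_measure)
      also have "\<dots> \<le> (2 * S + 1 / e) * r" using S0 r0 e by (simp add: field_simps)
      finally show ?thesis using mA goal_eq by simp
    qed
  qed
qed

end
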